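(* Let $(X,\kappa)$ be a finite digital image which is strongly contractible, i.e. $\mathrm{id}_X$ is strongly homotopic to a constant map. Then every continuous map $f:X\to X$ has a fixed point or at least two approximate fixed points.
   Context: A digital image is a pair $(X,\kappa)$ where $X$ is a set and $\kappa$ is a symmetric irreflexive relation on $X$ (the adjacency). Write $x\leftrightarrow y$ if adjacent, $x\Leftrightarrow y$ if adjacent or equal. A map $f$ is continuous if $x\leftrightarrow y$ implies $f(x)\Leftrightarrow f(y)$. A point $x$ is an approximate fixed point of $f:X\to X$ if $f(x)\Leftrightarrow x$. The digital interval $[0,m]_{\mathbb Z}$ has consecutive integers adjacent. Continuous $f,g:X\to Y$ are strongly homotopic ($f\simeq^* g$) if there exist $m\ge1$ and $H:X\times[0,m]_{\mathbb Z}\to Y$ with $H(\cdot,0)=f$, $H(\cdot,m)=g$, such that whenever $(x,t)\neq(x',t')$, $x\Leftrightarrow x'$ and $|t-t'|\le1$, we have $H(x,t)\Leftrightarrow H(x',t')$. *)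

theory Defs
  imports Main
begin

definition digital_image :: "'a set \<Rightarrow> ('a \<Rightarrow> 'a \<Rightarrow> bool) \<Rightarrow> bool" where
  "digital_image X adj \<longleftrightarrow>
     (\<forall>x\<in>X. \<forall>y\<in>X. adj x y \<longrightarrow> adj y x) \<and> (\<forall>x\<in>X. \<not> adj x x)"

definition adj_eq :: "('a \<Rightarrow> 'a \<Rightarrow> bool) \<Rightarrow> 'a \<Rightarrow> 'a \<Rightarrow> bool" where
  "adj_eq adj x y \<longleftrightarrow> adj x y \<or> x = y"

definition digitally_continuous ::
  "'a set \<Rightarrow> ('a \<Rightarrow> 'a \<Rightarrow> bool) \<Rightarrow> 'b set \<Rightarrow> ('b \<Rightarrow> 'b \<Rightarrow> bool) \<Rightarrow> ('a \<Rightarrow> 'b) \<Rightarrow> bool" where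
  "digitally_continuous X adjX Y adjY f \<longleftrightarrow>
     f ` X \<subseteq> Y \<and> (\<forall>x\<in>X. \<forall>y\<in>X. adjX x y \<longrightarrow> adj_eq adjY (f x) (f y))"

definition approx_fixed_point :: "('a \<Rightarrow> 'a \<Rightarrow> bool) \<Rightarrow> ('a \<Rightarrow> 'a) \<Rightarrow> 'a \<Rightarrow> bool" where
  "approx_fixed_point adj f x \<longleftrightarrow> adj_eq adj (f x) x"

definition strongly_homotopic ::
  "'a set \<Rightarrow> ('a \<Rightarrow> 'a \<Rightarrow> bool) \<Rightarrow> 'b set \<Rightarrow> ('b \<Rightarrow> 'b \<Rightarrow> bool) \<Rightarrow> ('a \<Rightarrow> 'b) \<Rightarrow> ('a \<Rightarrow> 'b) \<Rightarrow> bool" where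
  "strongly_homotopic X adjX Y adjY f g \<longleftrightarrow>
     digitally_continuous X adjX Y adjY f \<and> digitally_continuous X adjX Y adjY g \<and>
     (\<exists>(m::nat) (H :: 'a \<Rightarrow> nat \<Rightarrow> 'b). m \<ge> 1 \<and>
        (\<forall>x\<in>X. \<forall>t\<le>m. H x t \<in> Y) \<and>
        (\<forall>x\<in>X. H x 0 = f x) \<and> (\<forall>x\<in>X. H x m = g x) \<and>
        (\<forall>x\<in>X. \<forall>x'\<in>X. \<forall>t\<le>m. \<forall>t'\<le>m.
           (x, t) \<noteq> (x', t') \<and> adj_eq adjX x x' \<and> (t \<le> t' + 1 \<and> t' \<le> t + 1)
           \<longrightarrow> adj_eq adjY (H x t) (H x' t')))"

definition strongly_contractible :: "'a set \<Rightarrow> ('a \<Rightarrow> 'a \<Rightarrow> bool) \<Rightarrow> bool" where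
  "strongly_contractible X adj \<longleftrightarrow>
     (\<exists>c\<in>X. strongly_homotopic X adj X adj id (\<lambda>_. c))"

end

theory Submission
  imports Defs
begin

primrec seqp :: "'a \<Rightarrow> ('a \<Rightarrow> nat \<Rightarrow> 'a) \<Rightarrow> ('a \<Rightarrow> 'a) \<Rightarrow> nat \<Rightarrow> nat \<Rightarrow> 'a" where
  "seqp c H f m 0 = c"
| "seqp c H f m (Suc s) = H (f (seqp c H f m s)) (m - Suc s)"

theorem theorem3p7:
  fixes X :: "'a set" and adj :: "'a \<Rightarrow> 'a \<Rightarrow> bool" and f :: "'a \<Rightarrow> 'a"
  assumes "digital_image X adj"
    and "finite X"
    and "strongly_contractible X adj"
    and "digitally_continuous X adj X adj f"
  shows "(\<exists>x\<in>X. f x = x) \<or>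
         (\<exists>x\<in>X. \<exists>y\<in>X. x \<noteq> y \<and> approx_fixed_point adj f x \<and> approx_fixed_point adj f y)"
proof -
  have sym: "\<And>x y. x \<in> X \<Longrightarrow> y \<in> X \<Longrightarrow> adj_eq adj x y \<Longrightarrow> adj_eq adj y x"
    using assms(1) unfolding digital_image_def adj_eq_def by blast
  have fX: "\<And>x. x \<in> X \<Longrightarrow> f x \<in> X" using assms(4) unfolding digitally_continuous_def by blast
  have cont: "\<And>x y. x \<in> X \<Longrightarrow> y \<in> X \<Longrightarrow> adj_eq adj x y \<Longrightarrow> adj_eq adj (f x) (f y)"
    using assms(4) unfolding digitally_continuous_def adj_eq_def by blast
  obtain c where cX: "c \<in> X" and sh: "strongly_homotopic X adj X adj id (\<lambda>_. c)"
    using assms(3) unfolding strongly_contractible_def by blast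
  have "\<exists>(m::nat) H. m \<ge> 1 \<and> (\<forall>x\<in>X. \<forall>t\<le>m. H x t \<in> X) \<and>
        (\<forall>x\<in>X. H x 0 = id x) \<and> (\<forall>x\<in>X. H x m = c) \<and>
        (\<forall>x\<in>X. \<forall>x'\<in>X. \<forall>t\<le>m. \<forall>t'\<le>m.
           (x, t) \<noteq> (x', t') \<and> adj_eq adj x x' \<and> (t \<le> t' + 1 \<and> t' \<le> t + 1)
           \<longrightarrow> adj_eq adj (H x t) (H x' t'))"
    using sh unfolding strongly_homotopic_def by (elim conjE)
  then obtain m :: nat and H :: "'a \<Rightarrow> nat \<Rightarrow> 'a" where all: "m \<ge> 1 \<and> (\<forall>x\<in>X. \<forall>t\<le>m. H x t \<in> X) \<and>
        (\<forall>x\<in>X. H x 0 = id x) \<and> (\<forall>x\<in>X. H x m = c) \<and>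
        (\<forall>x\<in>X. \<forall>x'\<in>X. \<forall>t\<le>m. \<forall>t'\<le>m.
           (x, t) \<noteq> (x', t') \<and> adj_eq adj x x' \<and> (t \<le> t' + 1 \<and> t' \<le> t + 1)
           \<longrightarrow> adj_eq adj (H x t) (H x' t'))"
    by blast
  note m1 = all[THEN conjunct1]
  note HX = all[THEN conjunct2, THEN conjunct1]
  note H0' = all[THEN conjunct2, THEN conjunct2, THEN conjunct1]
  note Hm = all[THEN conjunct2, THEN conjunct2, THEN conjunct2, THEN conjunct1]
  note Hadj = all[THEN conjunct2, THEN conjunct2, THEN conjunct2, THEN conjunct2]
  have H0: "\<forall>x\<in>X. H x 0 = x" using H0' by simp
  let ?p = "seqp c H f m"
  have inX: "\<And>s. ?p s \<in> X"
  proof -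
    fix s show "?p s \<in> X"
      by (induction s) (auto simp: cX HX fX)
  qed
  have step: "\<And>s. s < m \<Longrightarrow> adj_eq adj (?p s) (?p (Suc s))"
  proof -
    fix s show "s < m \<Longrightarrow> adj_eq adj (?p s) (?p (Suc s))"
    proof (induction s)
      case 0
      have "c = H (f c) m" using Hm fX cX by auto
      moreover have "adj_eq adj (H (f c) m) (H (f c) (m - 1))"
      proof -
        have "(f c, m) \<noteq> (f c, m - 1)" using m1 by simp
        moreover have "adj_eq adj (f c) (f c)" by (simp add: adj_eq_def)
        ultimately show ?thesis
          by (intro Hadj[rule_format]) (use fX[OF cX] m1 in auto)
      qed
      ultimately show ?case by simp
    next
      case (Suc s)
      have a: "adj_eq adj (f (?p s)) (f (?p (Suc s)))"
        using cont[OF inX inX Suc.IH] Suc.prems by simp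
      have "adj_eq adj (H (f (?p s)) (m - Suc s)) (H (f (?p (Suc s))) (m - Suc (Suc s)))"
      proof -
        have "(f (?p s), m - Suc s) \<noteq> (f (?p (Suc s)), m - Suc (Suc s))" using Suc.prems by (auto simp del: seqp.simps)
        moreover have "m - Suc s \<le> m - Suc (Suc s) + 1" "m - Suc (Suc s) \<le> m - Suc s + 1"
          using Suc.prems by auto
        ultimately show ?thesis
          by (intro Hadj[rule_format]) (use a fX[OF inX[of s]] fX[OF inX[of "Suc s"]] in auto)
      qed
      then show ?case by simp
    qed
  qed
  define x where "x = ?p (m - 1)"
  have xX: "x \<in> X" using inX x_def by simp
  have "?p m = ?p (Suc (m - 1))" using m1 by simp
  also have "\<dots> = f x" using H0 fX xX x_def by simp
  finally have pm: "?p m = f x" .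
  have "adj_eq adj x (f x)" using step[of "m - 1"] m1 pm x_def by simp
  hence ax: "approx_fixed_point adj f x" using sym xX fX unfolding approx_fixed_point_def by blast
  show ?thesis
  proof (cases "f x = x")
    case True then show ?thesis using xX by blast
  next
    case False
    have "adj_eq adj (f x) (f (f x))" using cont xX fX \<open>adj_eq adj x (f x)\<close> by blast
    hence "approx_fixed_point adj f (f x)" using sym xX fX unfolding approx_fixed_point_def by blast
    then show ?thesis using ax False xX fX by blast
  qed
qed

end
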